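(* The map $\langle\cdot,\cdot\rangle\mapsto(\langle e_p,e_p\rangle)_{p\in\mathbb{Z}}$ defines a bijection of cones from $\mathcal{C}$ to $\mathcal{T}$, carrying $\mathcal{C}^+$ onto $\mathcal{T}^+$.
   Context: $\mathcal{S}$ is the space of rapidly decreasing complex sequences indexed by $\mathbb{Z}$, and $\mathcal{S}^*$ its dual (sequences of polynomial growth, paired by $\sum b^pc_p$); $e_p\in\mathcal{S}^*$ is the sequence with $1$ in place $p$ and $0$ elsewhere. Via the Fourier isomorphism $\mathcal{S}\cong L\mathbb{C}=C^\infty(S^1,\mathbb{C})$, rotation of the circle by $\lambda\in S^1$ and reversal of loops give operators on $\mathcal{S}^*$ with $R_\lambda e_p=\lambda^{-p}e_p$ and $\iota e_p=e_{-p}$. $\mathcal{C}$ is the cone of continuous positive semi-definite sesquilinear forms on $\mathcal{S}^*$ invariant under all $R_\lambda$ and under $\iota$; $\mathcal{C}^+\subseteq\mathcal{C}$ is the sub-cone of positive definite forms. $\mathcal{T}$ is the cone of non-negative rapidly decreasing sequences $(a_p)_{p\in\mathbb{Z}}$ with $a_p=a_{-p}$ for all $p$, and $\mathcal{T}^+$ the sub-cone of strictly positive such sequences. *)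

theory Defs
  imports "HOL-Analysis.Analysis"
begin

definition rapidly_decreasing :: "(int \<Rightarrow> 'a::real_normed_vector) \<Rightarrow> bool" where
  "rapidly_decreasing c \<longleftrightarrow> (\<forall>k::nat. \<exists>C. \<forall>p. (1 + \<bar>real_of_int p\<bar>) ^ k * norm (c p) \<le> C)"

definition Sspace :: "(int \<Rightarrow> complex) set" where
  "Sspace = {c. rapidly_decreasing c}"

definition polynomial_growth :: "(int \<Rightarrow> complex) \<Rightarrow> bool" where
  "polynomial_growth b \<longleftrightarrow> (\<exists>(k::nat) C. \<forall>p. norm (b p) \<le> C * (1 + \<bar>real_of_int p\<bar>) ^ k)"

definition Sdual :: "(int \<Rightarrow> complex) set" where
  "Sdual = {b. polynomial_growth b}"

definition pairing :: "(int \<Rightarrow> complex) \<Rightarrow> (int \<Rightarrow> complex) \<Rightarrow> complex" where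
  "pairing b c = (\<Sum>\<^sub>\<infinity>p. b p * c p)"

definition ebasis :: "int \<Rightarrow> (int \<Rightarrow> complex)" where
  "ebasis p = (\<lambda>q. if q = p then 1 else 0)"

text \<open>Rotation and reversal on S* (transposes of the corresponding operators on S);
  R_lambda e_p = lambda^(-p) e_p, iota e_p = e_(-p).\<close>
definition rot :: "complex \<Rightarrow> (int \<Rightarrow> complex) \<Rightarrow> (int \<Rightarrow> complex)" where
  "rot z b = (\<lambda>p. z powi (- p) * b p)"

definition reversal :: "(int \<Rightarrow> complex) \<Rightarrow> (int \<Rightarrow> complex)" where
  "reversal b = (\<lambda>p. b (- p))"

text \<open>Bounded subsets of the Frechet space S, and polars (basic 0-neighbourhoods
  of the strong dual topology on S*).\<close>
definition S_bounded :: "(int \<Rightarrow> complex) set \<Rightarrow> bool" where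
  "S_bounded B \<longleftrightarrow> B \<subseteq> Sspace \<and>
     (\<forall>k::nat. \<exists>C. \<forall>c\<in>B. \<forall>p. (1 + \<bar>real_of_int p\<bar>) ^ k * norm (c p) \<le> C)"

definition polar :: "(int \<Rightarrow> complex) set \<Rightarrow> (int \<Rightarrow> complex) set" where
  "polar B = {b \<in> Sdual. \<forall>c\<in>B. norm (pairing b c) \<le> 1}"

type_synonym form = "(int \<Rightarrow> complex) \<Rightarrow> (int \<Rightarrow> complex) \<Rightarrow> complex"

text \<open>A form on S*, represented extensionally (value 0 outside S* x S*),
  conjugate-linear in the first and linear in the second argument.\<close>
definition sesquilinear_on_Sdual :: "form \<Rightarrow> bool" where
  "sesquilinear_on_Sdual f \<longleftrightarrow>
     (\<forall>b c. (b \<notin> Sdual \<or> c \<notin> Sdual) \<longrightarrow> f b c = 0) \<and>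
     (\<forall>a\<in>Sdual. \<forall>b\<in>Sdual. \<forall>c\<in>Sdual. \<forall>s t::complex.
        f a (\<lambda>p. s * b p + t * c p) = s * f a b + t * f a c \<and>
        f (\<lambda>p. s * b p + t * c p) a = cnj s * f b a + cnj t * f c a)"

text \<open>Joint continuity w.r.t. the strong dual topology: f is bounded on U x U
  for some 0-neighbourhood U = polar B, B bounded in S.\<close>
definition continuous_form :: "form \<Rightarrow> bool" where
  "continuous_form f \<longleftrightarrow>
     (\<exists>B. S_bounded B \<and> (\<exists>C. \<forall>b\<in>polar B. \<forall>c\<in>polar B. norm (f b c) \<le> C))"

definition pos_semidef :: "form \<Rightarrow> bool" where
  "pos_semidef f \<longleftrightarrow> (\<forall>b\<in>Sdual. Im (f b b) = 0 \<and> Re (f b b) \<ge> 0)"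

definition pos_def :: "form \<Rightarrow> bool" where
  "pos_def f \<longleftrightarrow> (\<forall>b\<in>Sdual. b \<noteq> (\<lambda>_. 0) \<longrightarrow> Im (f b b) = 0 \<and> Re (f b b) > 0)"

definition invariant_form :: "form \<Rightarrow> bool" where
  "invariant_form f \<longleftrightarrow>
     (\<forall>z::complex. norm z = 1 \<longrightarrow> (\<forall>b\<in>Sdual. \<forall>c\<in>Sdual. f (rot z b) (rot z c) = f b c)) \<and>
     (\<forall>b\<in>Sdual. \<forall>c\<in>Sdual. f (reversal b) (reversal c) = f b c)"

definition coneC :: "form set" where
  "coneC = {f. sesquilinear_on_Sdual f \<and> continuous_form f \<and> pos_semidef f \<and> invariant_form f}"

definition coneC_plus :: "form set" where
  "coneC_plus = {f \<in> coneC. pos_def f}"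

definition coneT :: "(int \<Rightarrow> real) set" where
  "coneT = {a. rapidly_decreasing a \<and> (\<forall>p. a p \<ge> 0 \<and> a p = a (- p))}"

definition coneT_plus :: "(int \<Rightarrow> real) set" where
  "coneT_plus = {a \<in> coneT. \<forall>p. a p > 0}"

text \<open>The map of the theorem: a form goes to its diagonal values on the e_p
  (which are real for positive semi-definite forms).\<close>
definition diag_map :: "form \<Rightarrow> (int \<Rightarrow> real)" where
  "diag_map f = (\<lambda>p. Re (f (ebasis p) (ebasis p)))"

end

theory Submission
  imports Defs
begin


lemma pg_nonneg:
  assumes "b \<in> Sdual"
  obtains k C where "C \<ge> 0" "\<And>p. norm (b p) \<le> C * (1 + \<bar>real_of_int p\<bar>) ^ k"
proof -
  from assms obtain k C where h: "\<And>p. norm (b p) \<le> C * (1 + \<bar>real_of_int p\<bar>) ^ k"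
    unfolding Sdual_def polynomial_growth_def by blast
  have "C \<ge> 0" using h[of 0] norm_ge_zero[of "b 0"] by (simp del: norm_ge_zero)
  then show ?thesis using h that by blast
qed

lemma w_ge1: "(1::real) \<le> 1 + \<bar>real_of_int p\<bar>" by simp

lemma w_pow_mono: "k \<le> m \<Longrightarrow> (1 + \<bar>real_of_int p\<bar>) ^ k \<le> (1 + \<bar>real_of_int p\<bar>) ^ m"
  by (rule power_increasing) auto

lemma Sdual_lin:
  assumes "b \<in> Sdual" "c \<in> Sdual"
  shows "(\<lambda>p. s * b p + t * c p) \<in> Sdual"
proof -
  obtain k1 C1 where C1: "C1 \<ge> 0" "\<And>p. norm (b p) \<le> C1 * (1 + \<bar>real_of_int p\<bar>) ^ k1"
    using pg_nonneg[OF assms(1)] by blast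
  obtain k2 C2 where C2: "C2 \<ge> 0" "\<And>p. norm (c p) \<le> C2 * (1 + \<bar>real_of_int p\<bar>) ^ k2"
    using pg_nonneg[OF assms(2)] by blast
  have "norm (s * b p + t * c p) \<le> (norm s * C1 + norm t * C2) * (1 + \<bar>real_of_int p\<bar>) ^ (k1 + k2)" for p
  proof -
    let ?w = "(1 + \<bar>real_of_int p\<bar>) ^ (k1 + k2)"
    have "norm (s * b p + t * c p) \<le> norm s * norm (b p) + norm t * norm (c p)"
      by (metis norm_mult norm_triangle_ineq)
    also have "norm s * norm (b p) \<le> norm s * (C1 * ?w)"
      by (rule mult_left_mono[OF order.trans[OF C1(2)]])
         (auto intro!: mult_left_mono w_pow_mono simp: C1(1))
    also have "norm t * norm (c p) \<le> norm t * (C2 * ?w)"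
      by (rule mult_left_mono[OF order.trans[OF C2(2)]])
         (auto intro!: mult_left_mono w_pow_mono simp: C2(1))
    finally show ?thesis by (simp add: algebra_simps)
  qed
  then show ?thesis unfolding Sdual_def polynomial_growth_def by blast
qed

lemma Sdual_dom:
  assumes "b \<in> Sdual" "\<And>p. norm (u p) \<le> norm (b p)"
  shows "u \<in> Sdual"
proof -
  obtain k C where "\<And>p. norm (b p) \<le> C * (1 + \<bar>real_of_int p\<bar>) ^ k"
    using assms(1) unfolding Sdual_def polynomial_growth_def by blast
  then show ?thesis unfolding Sdual_def polynomial_growth_def
    using assms(2) order.trans by blast
qed

lemma zero_Sdual: "(\<lambda>_. 0) \<in> Sdual"
  unfolding Sdual_def polynomial_growth_def by (rule CollectI, rule exI[of _ 0], rule exI[of _ 0]) simp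

lemma ebasis_Sdual: "ebasis p \<in> Sdual"
  unfolding Sdual_def polynomial_growth_def ebasis_def
  by (rule CollectI, rule exI[of _ 0], rule exI[of _ 1]) auto

lemma Sdual_scale: "b \<in> Sdual \<Longrightarrow> (\<lambda>p. s * b p) \<in> Sdual"
  using Sdual_lin[of b b s 0] by simp

lemma Sdual_add: "b \<in> Sdual \<Longrightarrow> c \<in> Sdual \<Longrightarrow> (\<lambda>p. b p + c p) \<in> Sdual"
  using Sdual_lin[of b c 1 1] by simp

lemma Sdual_sum:
  assumes "finite S" "\<And>i. i \<in> S \<Longrightarrow> u i \<in> Sdual"
  shows "(\<lambda>q. \<Sum>i\<in>S. s i * u i q) \<in> Sdual"
  using assms
proof (induction S rule: finite_induct)
  case empty then show ?case by (simp add: zero_Sdual)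
next
  case (insert x F)
  then show ?case using Sdual_lin[of "u x" "\<lambda>q. \<Sum>i\<in>F. s i * u i q" "s x" 1] by simp
qed

context
  fixes f :: form
  assumes sf: "sesquilinear_on_Sdual f"
begin

lemma sq_lin2: "a \<in> Sdual \<Longrightarrow> b \<in> Sdual \<Longrightarrow> c \<in> Sdual \<Longrightarrow>
   f a (\<lambda>p. s * b p + t * c p) = s * f a b + t * f a c"
  using sf unfolding sesquilinear_on_Sdual_def by blast

lemma sq_lin1: "a \<in> Sdual \<Longrightarrow> b \<in> Sdual \<Longrightarrow> c \<in> Sdual \<Longrightarrow>
   f (\<lambda>p. s * b p + t * c p) a = cnj s * f b a + cnj t * f c a"
  using sf unfolding sesquilinear_on_Sdual_def by blast

lemma sq_out: "b \<notin> Sdual \<or> c \<notin> Sdual \<Longrightarrow> f b c = 0"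
  using sf unfolding sesquilinear_on_Sdual_def by blast

lemma sq_scale2: "a \<in> Sdual \<Longrightarrow> b \<in> Sdual \<Longrightarrow> f a (\<lambda>p. s * b p) = s * f a b"
  using sq_lin2[of a b b s 0] by simp

lemma sq_scale1: "a \<in> Sdual \<Longrightarrow> b \<in> Sdual \<Longrightarrow> f (\<lambda>p. s * b p) a = cnj s * f b a"
  using sq_lin1[of a b b s 0] by simp

lemma sq_add2: "a \<in> Sdual \<Longrightarrow> b \<in> Sdual \<Longrightarrow> c \<in> Sdual \<Longrightarrow> f a (\<lambda>p. b p + c p) = f a b + f a c"
  using sq_lin2[of a b c 1 1] by simp

lemma sq_add1: "a \<in> Sdual \<Longrightarrow> b \<in> Sdual \<Longrightarrow> c \<in> Sdual \<Longrightarrow> f (\<lambda>p. b p + c p) a = f b a + f c a"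
  using sq_lin1[of a b c 1 1] by simp

lemma sq_sum2:
  assumes "finite S" "\<And>i. i \<in> S \<Longrightarrow> u i \<in> Sdual" "a \<in> Sdual"
  shows "f a (\<lambda>q. \<Sum>i\<in>S. s i * u i q) = (\<Sum>i\<in>S. s i * f a (u i))"
  using assms
proof (induction S rule: finite_induct)
  case empty
  then show ?case using sq_scale2[of a "\<lambda>_. 0" 0] by (simp add: zero_Sdual)
next
  case (insert x F)
  have "f a (\<lambda>q. \<Sum>i\<in>insert x F. s i * u i q) = f a (\<lambda>q. s x * u x q + 1 * (\<Sum>i\<in>F. s i * u i q))"
    using insert by simp
  also have "\<dots> = s x * f a (u x) + 1 * f a (\<lambda>q. \<Sum>i\<in>F. s i * u i q)"
    using insert by (intro sq_lin2 Sdual_sum) auto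
  finally show ?case using insert by simp
qed

lemma sq_sum1:
  assumes "finite S" "\<And>i. i \<in> S \<Longrightarrow> u i \<in> Sdual" "a \<in> Sdual"
  shows "f (\<lambda>q. \<Sum>i\<in>S. s i * u i q) a = (\<Sum>i\<in>S. cnj (s i) * f (u i) a)"
  using assms
proof (induction S rule: finite_induct)
  case empty
  then show ?case using sq_scale1[of a "\<lambda>_. 0" 0] by (simp add: zero_Sdual)
next
  case (insert x F)
  have "f (\<lambda>q. \<Sum>i\<in>insert x F. s i * u i q) a = f (\<lambda>q. s x * u x q + 1 * (\<Sum>i\<in>F. s i * u i q)) a"
    using insert by simp
  also have "\<dots> = cnj (s x) * f (u x) a + cnj 1 * f (\<lambda>q. \<Sum>i\<in>F. s i * u i q) a"
    using insert by (intro sq_lin1 Sdual_sum) auto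
  finally show ?case using insert by simp
qed

end



lemma infsum_single_pt:
  assumes "\<And>q. q \<noteq> p \<Longrightarrow> g q = (0::'a::{comm_monoid_add,t2_space})"
  shows "infsum g UNIV = g p"
proof -
  have "infsum g UNIV = infsum g {p}"
    by (rule infsum_cong_neutral) (use assms in auto)
  then show ?thesis by simp
qed

lemma pairing_ebasis_scaled: "pairing (\<lambda>q. x * ebasis p q) d = x * d p"
  unfolding pairing_def by (subst infsum_single_pt[of p]) (auto simp: ebasis_def)

lemma rot_ebasis: "rot z (ebasis p) = (\<lambda>q. z powi (- p) * ebasis p q)"
  unfolding rot_def ebasis_def by (auto simp: fun_eq_iff)

lemma reversal_ebasis: "reversal (ebasis p) = ebasis (- p)"
  unfolding reversal_def ebasis_def by (auto simp: fun_eq_iff)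

lemma offdiag:
  assumes sf: "sesquilinear_on_Sdual f" and inv: "invariant_form f" and pq: "p \<noteq> q"
  shows "f (ebasis p) (ebasis q) = 0"
proof -
  define z where "z = cis (pi / real_of_int (p - q))"
  have nz: "norm z = 1" unfolding z_def by simp
  have "f (ebasis p) (ebasis q) = f (rot z (ebasis p)) (rot z (ebasis q))"
    using inv nz ebasis_Sdual unfolding invariant_form_def by auto
  also have "\<dots> = cnj (z powi (- p)) * (z powi (- q)) * f (ebasis p) (ebasis q)"
    unfolding rot_ebasis
    using sq_scale1[OF sf] sq_scale2[OF sf] ebasis_Sdual Sdual_scale by simp
  also have "cnj (z powi (- p)) * (z powi (- q)) = -1"
  proof -
    have "cnj (z powi (- p)) * (z powi (- q)) = cis (real_of_int (p - q) * (pi / real_of_int (p - q)))"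
      unfolding z_def cis_power_int cis_cnj cis_mult by (simp add: algebra_simps diff_divide_distrib)
    also have "\<dots> = cis pi" using pq by simp
    finally show ?thesis by simp
  qed
  finally show ?thesis by simp
qed

lemma sq_scale_real:
  assumes sf: "sesquilinear_on_Sdual f" and "u \<in> Sdual" "v \<in> Sdual"
  shows "f (\<lambda>q. complex_of_real \<alpha> * u q) (\<lambda>q. complex_of_real \<beta> * v q) = complex_of_real (\<alpha> * \<beta>) * f u v"
  using sq_scale1[OF sf] sq_scale2[OF sf] assms Sdual_scale by simp

lemma cont_bound:
  assumes sf: "sesquilinear_on_Sdual f" and "u \<in> Sdual" "v \<in> Sdual"
    and bd: "\<forall>b\<in>polar B. \<forall>c\<in>polar B. norm (f b c) \<le> C"
    and "\<alpha> > 0" "\<beta> > 0"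
    and "(\<lambda>q. complex_of_real \<alpha> * u q) \<in> polar B" "(\<lambda>q. complex_of_real \<beta> * v q) \<in> polar B"
  shows "norm (f u v) \<le> C / (\<alpha> * \<beta>)"
proof -
  have "norm (complex_of_real (\<alpha> * \<beta>) * f u v) \<le> C"
    using bd assms sq_scale_real[OF sf assms(2,3), of \<alpha> \<beta>] by metis
  then have "\<alpha> * \<beta> * norm (f u v) \<le> C" using assms by (simp add: norm_mult)
  then show ?thesis using assms by (simp add: field_simps)
qed



lemma sum_w2: "(\<lambda>p::int. 1 / (1 + \<bar>real_of_int p\<bar>)^2) summable_on UNIV"
proof -
  have sum_w2_nat: "(\<lambda>n::nat. 1 / (1 + real n)^2) summable_on UNIV"
  proof (rule summable_nonneg_imp_summable_on)
    have "summable (\<lambda>n::nat. inverse (real (Suc n) ^ 2))"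
      using inverse_power_summable[of 2, where 'a=real] by (subst summable_Suc_iff) simp
    then show "summable (\<lambda>n::nat. 1 / (1 + real n)^2)"
      by (simp add: inverse_eq_divide add.commute)
  qed auto
  let ?g = "\<lambda>p::int. 1 / (1 + \<bar>real_of_int p\<bar>)^2"
  have A: "?g summable_on (int ` UNIV)"
    using sum_w2_nat by (subst summable_on_reindex) (auto simp: o_def)
  have B: "?g summable_on ((\<lambda>n. - int n) ` UNIV)"
    using sum_w2_nat by (subst summable_on_reindex) (auto simp: o_def inj_def)
  have U: "int ` UNIV \<union> (\<lambda>n. - int n) ` UNIV = (UNIV :: int set)"
  proof -
    have "x \<in> int ` UNIV \<union> (\<lambda>n. - int n) ` UNIV" for x :: int
    proof (cases "x \<ge> 0")
      case True then show ?thesis by (metis UnI1 nonneg_int_cases rangeI)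
    next
      case False then have "x = - int (nat (-x))" by simp
      then show ?thesis by blast
    qed
    then show ?thesis by blast
  qed
  show ?thesis using summable_on_union[OF A B] U by simp
qed

definition S2 :: real where "S2 = infsum (\<lambda>p::int. 1 / (1 + \<bar>real_of_int p\<bar>)^2) UNIV"

lemma S2_nonneg: "S2 \<ge> 0"
  unfolding S2_def by (rule infsum_nonneg) simp

lemma pair_bound:
  assumes "S_bounded B" "b \<in> Sdual"
  obtains K where "K \<ge> 0" "\<And>d q. d \<in> B \<Longrightarrow> norm (b q) * norm (d q) * (1 + \<bar>real_of_int q\<bar>)^3 \<le> K"
proof -
  obtain k Cb where Cb: "Cb \<ge> 0" "\<And>p. norm (b p) \<le> Cb * (1 + \<bar>real_of_int p\<bar>) ^ k"
    using pg_nonneg[OF assms(2)] by blast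
  obtain C where C: "\<And>d p. d \<in> B \<Longrightarrow> (1 + \<bar>real_of_int p\<bar>) ^ (k+3) * norm (d p) \<le> C"
    using assms(1) unfolding S_bounded_def by blast
  define C' where "C' = max C 0"
  have "norm (b q) * norm (d q) * (1 + \<bar>real_of_int q\<bar>)^3 \<le> Cb * C'" if "d \<in> B" for d q
  proof -
    let ?w = "1 + \<bar>real_of_int q\<bar>"
    have "norm (b q) * norm (d q) * ?w^3 \<le> (Cb * ?w ^ k) * norm (d q) * ?w^3"
      by (intro mult_right_mono Cb(2)) auto
    also have "\<dots> = Cb * (?w ^ (k+3) * norm (d q))" by (simp add: power_add algebra_simps)
    also have "\<dots> \<le> Cb * C'" using C[OF that, of q] Cb(1) unfolding C'_def
      by (intro mult_left_mono) auto
    finally show ?thesis .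
  qed
  moreover have "Cb * C' \<ge> 0" using Cb(1) unfolding C'_def by simp
  ultimately show ?thesis using that by blast
qed

lemma in_polar:
  assumes "u \<in> Sdual" "M \<ge> 0" "M * S2 \<le> 1"
    and bd: "\<And>d q. d \<in> B \<Longrightarrow> norm (u q) * norm (d q) \<le> M / (1 + \<bar>real_of_int q\<bar>)^2"
  shows "u \<in> polar B"
proof -
  have "norm (pairing u d) \<le> 1" if "d \<in> B" for d
  proof -
    let ?h = "\<lambda>q::int. M * (1 / (1 + \<bar>real_of_int q\<bar>)^2)"
    have hs: "?h summable_on UNIV" using sum_w2 by (rule summable_on_cmult_right)
    have hs': "(\<lambda>q. norm (?h q)) summable_on UNIV"
      by (rule summable_on_iff_abs_summable_on_real[THEN iffD1, OF hs])
    have as: "(\<lambda>q. norm (u q * d q)) summable_on UNIV"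
      by (rule Infinite_Sum.abs_summable_on_comparison_test[OF hs', of "\<lambda>q. u q * d q"])
         (use bd[OF that] assms(2) in \<open>simp add: norm_mult\<close>)
    have "norm (pairing u d) \<le> infsum (\<lambda>q. norm (u q * d q)) UNIV"
      unfolding pairing_def by (rule norm_infsum_bound[OF as])
    also have "\<dots> \<le> infsum ?h UNIV"
      using as hs by (rule infsum_mono) (use bd[OF that] in \<open>simp add: norm_mult\<close>)
    also have "\<dots> = M * S2" unfolding S2_def by (rule infsum_cmult_right) (rule sum_w2)
    finally show ?thesis using assms(3) by simp
  qed
  then show ?thesis unfolding polar_def using assms(1) by blast
qed

definition trunc :: "nat \<Rightarrow> (int \<Rightarrow> complex) \<Rightarrow> (int \<Rightarrow> complex)" where
  "trunc N b = (\<lambda>q. if \<bar>q\<bar> \<le> int N then b q else 0)"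
definition tail :: "nat \<Rightarrow> (int \<Rightarrow> complex) \<Rightarrow> (int \<Rightarrow> complex)" where
  "tail N b = (\<lambda>q. if \<bar>q\<bar> \<le> int N then 0 else b q)"

lemma trunc_tail: "b = (\<lambda>q. trunc N b q + tail N b q)"
  unfolding trunc_def tail_def by auto

lemma trunc_Sdual: "b \<in> Sdual \<Longrightarrow> trunc N b \<in> Sdual"
  by (rule Sdual_dom) (auto simp: trunc_def)
lemma tail_Sdual: "b \<in> Sdual \<Longrightarrow> tail N b \<in> Sdual"
  by (rule Sdual_dom) (auto simp: tail_def)

lemma scale_dom_polar:
  assumes "S_bounded B" "u \<in> Sdual" "K \<ge> 0"
    and K: "\<And>d q. d \<in> B \<Longrightarrow> norm (u q) * norm (d q) * (1 + \<bar>real_of_int q\<bar>)^3 \<le> K"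
  shows "(\<lambda>q. complex_of_real (1 / (K * S2 + 1)) * u q) \<in> polar B"
proof (rule in_polar)
  let ?a = "1 / (K * S2 + 1)"
  have pos: "K * S2 + 1 > 0" using assms(3) S2_nonneg by (simp add: add_nonneg_pos)
  show "(\<lambda>q. complex_of_real ?a * u q) \<in> Sdual" using Sdual_scale assms(2) by blast
  show "?a * K \<ge> 0" using pos assms(3) by simp
  show "?a * K * S2 \<le> 1" using pos assms(3) S2_nonneg by (simp add: field_simps)
  fix d q assume d: "d \<in> B"
  let ?w = "1 + \<bar>real_of_int q\<bar>"
  have "norm (u q) * norm (d q) * ?w^2 \<le> norm (u q) * norm (d q) * ?w^3"
    by (intro mult_left_mono power_increasing) auto
  also have "\<dots> \<le> K" using K[OF d] .
  finally have l1: "norm (u q) * norm (d q) \<le> K / ?w^2" by (simp add: field_simps)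
  have e1: "norm (complex_of_real ?a * u q) * norm (d q) = ?a * (norm (u q) * norm (d q))"
    using pos by (simp only: norm_mult norm_of_real abs_of_pos mult.assoc) (simp add: abs_of_pos)
  have a0: "?a \<ge> 0" using pos by simp
  have "norm (complex_of_real ?a * u q) * norm (d q) \<le> ?a * (K / ?w^2)"
    unfolding e1 by (rule mult_left_mono[OF l1 a0])
  then show "norm (complex_of_real ?a * u q) * norm (d q) \<le> ?a * K / ?w^2"
    by simp
qed

lemma scale_tail_polar:
  assumes "S_bounded B" "v \<in> Sdual" "K \<ge> 0"
    and K: "\<And>d q. d \<in> B \<Longrightarrow> norm (v q) * norm (d q) * (1 + \<bar>real_of_int q\<bar>)^3 \<le> K"
  shows "(\<lambda>q. complex_of_real ((1 + real N) / (K * S2 + 1)) * tail N v q) \<in> polar B"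
proof (rule in_polar)
  let ?a = "(1 + real N) / (K * S2 + 1)"
  have pos: "K * S2 + 1 > 0" using assms(3) S2_nonneg by (simp add: add_nonneg_pos)
  show "(\<lambda>q. complex_of_real ?a * tail N v q) \<in> Sdual" using Sdual_scale tail_Sdual assms(2) by blast
  show "K / (K * S2 + 1) \<ge> 0" using pos assms(3) by simp
  show "K / (K * S2 + 1) * S2 \<le> 1" using pos assms(3) S2_nonneg by (simp add: field_simps)
  fix d q assume d: "d \<in> B"
  let ?w = "1 + \<bar>real_of_int q\<bar>"
  show "norm (complex_of_real ?a * tail N v q) * norm (d q) \<le> K / (K * S2 + 1) / ?w^2"
  proof (cases "\<bar>q\<bar> \<le> int N")
    case True then show ?thesis using pos assms(3) by (simp add: tail_def)
  next
    case False
    then have wN: "1 + real N \<le> ?w" by linarith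
    have "(1 + real N) * (norm (v q) * norm (d q) * ?w^2) \<le> ?w * (norm (v q) * norm (d q) * ?w^2)"
      by (rule mult_right_mono[OF wN]) auto
    also have "\<dots> = norm (v q) * norm (d q) * ?w^3" by (simp add: power3_eq_cube power2_eq_square)
    also have "\<dots> \<le> K" using K[OF d] .
    finally have l2: "(1 + real N) * (norm (v q) * norm (d q) * ?w^2) \<le> K" .
    have e2: "norm (v q) * norm (d q) * ((1 + real N) * ?w^2) = (1 + real N) * (norm (v q) * norm (d q) * ?w^2)"
      by (simp only: mult.assoc mult.commute mult.left_commute)
    have "norm (v q) * norm (d q) * ((1 + real N) * ?w^2) \<le> K"
      by (rule ord_eq_le_trans[OF e2 l2])
    moreover have pw: "(1 + real N) * ?w^2 > 0" by simp
    ultimately have "norm (v q) * norm (d q) \<le> K / ((1 + real N) * ?w^2)"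
      by (simp add: pos_le_divide_eq[OF pw])
    then have l3: "norm (v q) * norm (d q) \<le> K / (1 + real N) / ?w^2"
      by (simp add: divide_divide_eq_left)
    have e3: "norm (complex_of_real ?a * tail N v q) * norm (d q) = ?a * (norm (v q) * norm (d q))"
      using pos False by (simp only: norm_mult norm_of_real tail_def if_False mult.assoc) (simp add: abs_of_pos)
    have a0: "?a \<ge> 0" using pos by simp
    have "norm (complex_of_real ?a * tail N v q) * norm (d q) \<le> ?a * (K / (1 + real N) / ?w^2)"
      unfolding e3 by (rule mult_left_mono[OF l3 a0])
    also have "\<dots> = K / (K * S2 + 1) / ?w^2"
    proof -
      have gen: "\<And>a b c K::real. a \<noteq> 0 \<Longrightarrow> a / b * (K / a / c) = K / b / c"
        by (simp add: divide_simps)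
      show ?thesis by (rule gen) (simp del: of_nat_Suc)
    qed
    finally show ?thesis .
  qed
qed



lemma trunc_expand: "trunc N b = (\<lambda>q. \<Sum>p\<in>{- int N..int N}. b p * ebasis p q)"
proof
  fix q
  have "(\<Sum>p\<in>{- int N..int N}. b p * ebasis p q) = (\<Sum>p\<in>{- int N..int N}. if q = p then b q else 0)"
    by (rule sum.cong) (auto simp: ebasis_def)
  then show "trunc N b q = (\<Sum>p\<in>{- int N..int N}. b p * ebasis p q)"
    unfolding trunc_def by (auto simp: abs_le_iff)
qed

lemma trunc_form:
  assumes sf: "sesquilinear_on_Sdual f" and inv: "invariant_form f"
  shows "f (trunc N b) (trunc N c) = (\<Sum>p\<in>{- int N..int N}. cnj (b p) * c p * f (ebasis p) (ebasis p))"
proof -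
  let ?S = "{- int N..int N}"
  have tc: "trunc N c \<in> Sdual" unfolding trunc_expand by (rule Sdual_sum) (auto simp: ebasis_Sdual)
  have "f (trunc N b) (trunc N c) = (\<Sum>p\<in>?S. cnj (b p) * f (ebasis p) (trunc N c))"
    unfolding trunc_expand[of N b] using tc by (intro sq_sum1[OF sf]) (auto simp: ebasis_Sdual)
  also have "\<dots> = (\<Sum>p\<in>?S. cnj (b p) * (c p * f (ebasis p) (ebasis p)))"
  proof (rule sum.cong[OF refl])
    fix p assume p: "p \<in> ?S"
    have "f (ebasis p) (trunc N c) = (\<Sum>q\<in>?S. c q * f (ebasis p) (ebasis q))"
      unfolding trunc_expand[of N c] by (intro sq_sum2[OF sf]) (auto simp: ebasis_Sdual)
    also have "\<dots> = (\<Sum>q\<in>?S. if q = p then c p * f (ebasis p) (ebasis p) else 0)"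
      by (rule sum.cong[OF refl]) (auto simp: offdiag[OF sf inv])
    also have "\<dots> = c p * f (ebasis p) (ebasis p)" using p by simp
    finally show "cnj (b p) * f (ebasis p) (trunc N c) = cnj (b p) * (c p * f (ebasis p) (ebasis p))"
      by simp
  qed
  finally show ?thesis by (simp add: mult.assoc)
qed

lemma dom_K:
  assumes "\<And>q. norm (u q) \<le> norm (b q)"
    and K: "\<And>d q. d \<in> B \<Longrightarrow> norm (b q) * norm (d q) * (1 + \<bar>real_of_int q\<bar>)^3 \<le> K"
    and d: "d \<in> B"
  shows "norm (u q) * norm (d q) * (1 + \<bar>real_of_int q\<bar>)^3 \<le> K"
proof -
  have "norm (u q) * norm (d q) * (1 + \<bar>real_of_int q\<bar>)^3 \<le> norm (b q) * norm (d q) * (1 + \<bar>real_of_int q\<bar>)^3"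
    using assms(1)[of q] by (intro mult_right_mono) auto
  then show "norm (u q) * norm (d q) * (1 + \<bar>real_of_int q\<bar>)^3 \<le> K" using K[OF d, of q] by linarith
qed

lemma approx:
  assumes sf: "sesquilinear_on_Sdual f" and cf: "continuous_form f" and b: "b \<in> Sdual" and c: "c \<in> Sdual"
  obtains D where "\<And>N. norm (f b c - f (trunc N b) (trunc N c)) \<le> D / (1 + real N)"
proof -
  obtain B C0 where SB: "S_bounded B" and bd0: "\<forall>u\<in>polar B. \<forall>v\<in>polar B. norm (f u v) \<le> C0"
    using cf unfolding continuous_form_def by blast
  define C where "C = max C0 0"
  have bd: "\<forall>u\<in>polar B. \<forall>v\<in>polar B. norm (f u v) \<le> C" using bd0 unfolding C_def by force
  have C0: "C \<ge> 0" unfolding C_def by simp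
  obtain Kb where Kb: "Kb \<ge> 0" "\<And>d q. d \<in> B \<Longrightarrow> norm (b q) * norm (d q) * (1 + \<bar>real_of_int q\<bar>)^3 \<le> Kb"
    using pair_bound[OF SB b] by blast
  obtain Kc where Kc: "Kc \<ge> 0" "\<And>d q. d \<in> B \<Longrightarrow> norm (c q) * norm (d q) * (1 + \<bar>real_of_int q\<bar>)^3 \<le> Kc"
    using pair_bound[OF SB c] by blast
  have pb: "Kb * S2 + 1 > 0" using Kb(1) S2_nonneg by (simp add: add_nonneg_pos)
  have pc: "Kc * S2 + 1 > 0" using Kc(1) S2_nonneg by (simp add: add_nonneg_pos)
  define D where "D = 2 * (C * (Kb * S2 + 1) * (Kc * S2 + 1))"
  have "norm (f b c - f (trunc N b) (trunc N c)) \<le> D / (1 + real N)" for N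
  proof -
    have tb: "trunc N b \<in> Sdual" "tail N b \<in> Sdual" using b trunc_Sdual tail_Sdual by auto
    have tc: "trunc N c \<in> Sdual" "tail N c \<in> Sdual" using c trunc_Sdual tail_Sdual by auto
    have dec: "f b c - f (trunc N b) (trunc N c) = f (trunc N b) (tail N c) + f (tail N b) c"
    proof -
      have "f b c = f (\<lambda>q. trunc N b q + tail N b q) c" using trunc_tail[of b N] by simp
      also have "\<dots> = f (trunc N b) c + f (tail N b) c" using sq_add1[OF sf] tb c by simp
      also have "f (trunc N b) c = f (trunc N b) (\<lambda>q. trunc N c q + tail N c q)"
        using trunc_tail[of c N] by simp
      also have "\<dots> = f (trunc N b) (trunc N c) + f (trunc N b) (tail N c)"
        using sq_add2[OF sf] tb tc by simp
      finally show ?thesis by simp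
    qed
    have nN: "1 + real N > 0" by simp
    have e1: "norm (f (trunc N b) (tail N c)) \<le> C / ((1 / (Kb * S2 + 1)) * ((1 + real N) / (Kc * S2 + 1)))"
    proof (rule cont_bound[OF sf tb(1) tc(2) bd])
      show "1 / (Kb * S2 + 1) > 0" using pb by simp
      show "(1 + real N) / (Kc * S2 + 1) > 0" using pc nN by simp
      show "(\<lambda>q. complex_of_real (1 / (Kb * S2 + 1)) * trunc N b q) \<in> polar B"
      proof (rule scale_dom_polar[OF SB tb(1) Kb(1)])
        fix d q assume "d \<in> B"
        show "norm (trunc N b q) * norm (d q) * (1 + \<bar>real_of_int q\<bar>)^3 \<le> Kb"
          using Kb(2) \<open>d \<in> B\<close> by (intro dom_K[of "trunc N b" b B Kb]) (auto simp: trunc_def)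
      qed
      show "(\<lambda>q. complex_of_real ((1 + real N) / (Kc * S2 + 1)) * tail N c q) \<in> polar B"
        by (rule scale_tail_polar[OF SB c Kc(1)]) (rule Kc(2), assumption)
    qed
    have e2: "norm (f (tail N b) c) \<le> C / (((1 + real N) / (Kb * S2 + 1)) * (1 / (Kc * S2 + 1)))"
    proof (rule cont_bound[OF sf tb(2) c bd])
      show "1 / (Kc * S2 + 1) > 0" using pc by simp
      show "(1 + real N) / (Kb * S2 + 1) > 0" using pb nN by simp
      show "(\<lambda>q. complex_of_real (1 / (Kc * S2 + 1)) * c q) \<in> polar B"
        by (rule scale_dom_polar[OF SB c Kc(1)]) (rule Kc(2), assumption)
      show "(\<lambda>q. complex_of_real ((1 + real N) / (Kb * S2 + 1)) * tail N b q) \<in> polar B"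
        by (rule scale_tail_polar[OF SB b Kb(1)]) (rule Kb(2), assumption)
    qed
    have r1: "C / ((1 / (Kb * S2 + 1)) * ((1 + real N) / (Kc * S2 + 1))) = (C * (Kb * S2 + 1) * (Kc * S2 + 1)) / (1 + real N)"
      using pb pc nN by (simp add: field_simps)
    have r2: "C / (((1 + real N) / (Kb * S2 + 1)) * (1 / (Kc * S2 + 1))) = (C * (Kb * S2 + 1) * (Kc * S2 + 1)) / (1 + real N)"
      using pb pc nN by (simp add: field_simps)
    have "norm (f b c - f (trunc N b) (trunc N c)) \<le> norm (f (trunc N b) (tail N c)) + norm (f (tail N b) c)"
      unfolding dec by (rule norm_triangle_ineq)
    also have "\<dots> \<le> D / (1 + real N)" using e1 e2 r1 r2 unfolding D_def by (simp add: field_simps)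
    finally show ?thesis .
  qed
  then show ?thesis using that by blast
qed

lemma small_zero:
  fixes x D :: real
  assumes "x \<ge> 0" "\<And>N::nat. x \<le> D / (1 + real N)"
  shows "x = 0"
proof (rule ccontr)
  assume "x \<noteq> 0" then have xp: "x > 0" using assms(1) by simp
  obtain N :: nat where N: "D / x < real N" using reals_Archimedean2 by blast
  then have "D < x * real N" using xp by (simp add: field_simps)
  also have "\<dots> < x * (1 + real N)" using xp by simp
  finally have "D / (1 + real N) < x" by (simp add: field_simps)
  then show False using assms(2)[of N] by simp
qed

lemma diag_eq:
  assumes "f \<in> coneC" "g \<in> coneC" "diag_map f = diag_map g"
  shows "f (ebasis p) (ebasis p) = g (ebasis p) (ebasis p)"
proof -
  have "Im (f (ebasis p) (ebasis p)) = 0" "Im (g (ebasis p) (ebasis p)) = 0"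
    using assms(1,2) ebasis_Sdual unfolding coneC_def pos_semidef_def by auto
  moreover have "Re (f (ebasis p) (ebasis p)) = Re (g (ebasis p) (ebasis p))"
    using assms(3) unfolding diag_map_def by (metis)
  ultimately show ?thesis by (simp add: complex_eq_iff)
qed

lemma inj_diag: "inj_on diag_map coneC"
proof (rule inj_onI)
  fix f g assume f: "f \<in> coneC" and g: "g \<in> coneC" and eq: "diag_map f = diag_map g"
  have sf: "sesquilinear_on_Sdual f" "continuous_form f" "invariant_form f"
    using f unfolding coneC_def by auto
  have sg: "sesquilinear_on_Sdual g" "continuous_form g" "invariant_form g"
    using g unfolding coneC_def by auto
  show "f = g"
  proof (rule ext, rule ext)
    fix b c
    show "f b c = g b c"
    proof (cases "b \<in> Sdual \<and> c \<in> Sdual")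
      case False then show ?thesis using sq_out[OF sf(1)] sq_out[OF sg(1)] by auto
    next
      case True
      obtain D1 where D1: "\<And>N. norm (f b c - f (trunc N b) (trunc N c)) \<le> D1 / (1 + real N)"
        using approx[OF sf(1,2)] True by blast
      obtain D2 where D2: "\<And>N. norm (g b c - g (trunc N b) (trunc N c)) \<le> D2 / (1 + real N)"
        using approx[OF sg(1,2)] True by blast
      have tt: "f (trunc N b) (trunc N c) = g (trunc N b) (trunc N c)" for N
        unfolding trunc_form[OF sf(1,3)] trunc_form[OF sg(1,3)] using diag_eq[OF f g eq] by simp
      have "norm (f b c - g b c) \<le> (D1 + D2) / (1 + real N)" for N
      proof -
        have "f b c - g b c = (f b c - f (trunc N b) (trunc N c)) - (g b c - g (trunc N b) (trunc N c))"
          using tt[of N] by simp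
        then have "norm (f b c - g b c) \<le> norm (f b c - f (trunc N b) (trunc N c)) + norm (g b c - g (trunc N b) (trunc N c))"
          by (metis norm_triangle_ineq4)
        also have "\<dots> \<le> D1 / (1 + real N) + D2 / (1 + real N)" using D1[of N] D2[of N] by simp
        finally show ?thesis by (simp add: add_divide_distrib)
      qed
      then have "norm (f b c - g b c) = 0" by (intro small_zero) auto
      then show ?thesis by simp
    qed
  qed
qed



lemma summable_bound:
  fixes g :: "int \<Rightarrow> complex"
  assumes "M \<ge> 0" "\<And>p. norm (g p) \<le> M * (1 / (1 + \<bar>real_of_int p\<bar>)^2)"
  shows "g summable_on UNIV" "norm (infsum g UNIV) \<le> M * S2"
proof -
  let ?h = "\<lambda>q::int. M * (1 / (1 + \<bar>real_of_int q\<bar>)^2)"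
  have hs: "?h summable_on UNIV" using sum_w2 by (rule summable_on_cmult_right)
  have hs': "(\<lambda>q. norm (?h q)) summable_on UNIV"
    by (rule summable_on_iff_abs_summable_on_real[THEN iffD1, OF hs])
  have as: "(\<lambda>q. norm (g q)) summable_on UNIV"
    by (rule Infinite_Sum.abs_summable_on_comparison_test[OF hs', of g])
       (use assms in \<open>simp\<close>)
  show "g summable_on UNIV" by (rule abs_summable_summable[OF as])
  have "norm (infsum g UNIV) \<le> infsum (\<lambda>q. norm (g q)) UNIV"
    by (rule norm_infsum_bound[OF as])
  also have "\<dots> \<le> infsum ?h UNIV"
    using as hs by (rule infsum_mono) (use assms in simp)
  also have "\<dots> = M * S2" unfolding S2_def by (rule infsum_cmult_right) (rule sum_w2)
  finally show "norm (infsum g UNIV) \<le> M * S2" .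
qed

lemma pairing_ebasis_scaled2: "pairing u (\<lambda>q. x * ebasis p q) = u p * x"
  unfolding pairing_def by (subst infsum_single_pt[of p]) (auto simp: ebasis_def)

lemma diag_in_T:
  assumes f: "f \<in> coneC"
  shows "diag_map f \<in> coneT"
proof -
  have sf: "sesquilinear_on_Sdual f" and cf: "continuous_form f" and ps: "pos_semidef f"
    and inv: "invariant_form f" using f unfolding coneC_def by auto
  have nonneg: "diag_map f p \<ge> 0" for p
    using ps ebasis_Sdual unfolding pos_semidef_def diag_map_def by auto
  have sym: "diag_map f p = diag_map f (- p)" for p
  proof -
    have "f (reversal (ebasis p)) (reversal (ebasis p)) = f (ebasis p) (ebasis p)"
      using inv ebasis_Sdual unfolding invariant_form_def by auto
    then show ?thesis unfolding diag_map_def reversal_ebasis by simp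
  qed
  obtain B C0 where SB: "S_bounded B" and bd0: "\<forall>u\<in>polar B. \<forall>v\<in>polar B. norm (f u v) \<le> C0"
    using cf unfolding continuous_form_def by blast
  define C where "C = max C0 0"
  have bd: "\<forall>u\<in>polar B. \<forall>v\<in>polar B. norm (f u v) \<le> C" using bd0 unfolding C_def by force
  have rd: "\<exists>C'. \<forall>p. (1 + \<bar>real_of_int p\<bar>) ^ k * norm (diag_map f p) \<le> C'" for k
  proof -
    obtain Ck where Ck: "\<And>d p. d \<in> B \<Longrightarrow> (1 + \<bar>real_of_int p\<bar>) ^ k * norm (d p) \<le> Ck"
      using SB unfolding S_bounded_def by blast
    define M where "M = max Ck 1"
    have M1: "M \<ge> 1" unfolding M_def by simp
    have "(1 + \<bar>real_of_int p\<bar>) ^ k * norm (diag_map f p) \<le> C * M^2" for p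
    proof -
      let ?w = "1 + \<bar>real_of_int p\<bar>"
      define l where "l = ?w ^ k / M"
      have lp: "l > 0" unfolding l_def using M1 by simp
      let ?u = "\<lambda>q. complex_of_real l * ebasis p q"
      have uS: "?u \<in> Sdual" using Sdual_scale ebasis_Sdual by blast
      have "?u \<in> polar B"
        unfolding polar_def
      proof (intro CollectI conjI ballI uS)
        fix d assume d: "d \<in> B"
        have "norm (pairing ?u d) = l * norm (d p)"
          unfolding pairing_ebasis_scaled using lp by (simp add: norm_mult)
        also have "\<dots> = (?w ^ k * norm (d p)) / M" unfolding l_def by simp
        also have "\<dots> \<le> Ck / M" using Ck[OF d, of p] M1 by (intro divide_right_mono) auto
        also have "\<dots> \<le> 1" using M1 unfolding M_def by simp
        finally show "norm (pairing ?u d) \<le> 1" .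
      qed
      then have "norm (f ?u ?u) \<le> C" using bd by blast
      moreover have "f ?u ?u = complex_of_real (l * l) * f (ebasis p) (ebasis p)"
        by (rule sq_scale_real[OF sf ebasis_Sdual ebasis_Sdual])
      ultimately have "l * l * norm (f (ebasis p) (ebasis p)) \<le> C"
        using lp by (simp add: norm_mult)
      moreover have "norm (diag_map f p) \<le> norm (f (ebasis p) (ebasis p))"
        unfolding diag_map_def by (simp add: abs_Re_le_cmod)
      ultimately have h1: "l * l * norm (diag_map f p) \<le> C"
      proof -
        assume a1: "l * l * norm (f (ebasis p) (ebasis p)) \<le> C"
          and a2: "norm (diag_map f p) \<le> norm (f (ebasis p) (ebasis p))"
        have "l * l \<ge> 0" using lp by simp
        then have "l * l * norm (diag_map f p) \<le> l * l * norm (f (ebasis p) (ebasis p))"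
          using a2 by (rule mult_left_mono[rotated])
        then show ?thesis using a1 by (rule order_trans)
      qed
      have "l * l * norm (diag_map f p) = (?w ^ k * ?w ^ k * norm (diag_map f p)) / M^2"
        unfolding l_def by (simp add: power2_eq_square)
      then have h2: "?w ^ k * ?w ^ k * norm (diag_map f p) \<le> C * M^2"
        using h1 M1 by (simp add: divide_le_eq)
      have "?w ^ k * norm (diag_map f p) \<le> ?w ^ k * ?w ^ k * norm (diag_map f p)"
      proof -
        have w1: "1 \<le> ?w ^ k" by simp
        have "1 * (?w ^ k * norm (diag_map f p)) \<le> ?w ^ k * (?w ^ k * norm (diag_map f p))"
          by (rule mult_right_mono[OF w1]) simp
        then show ?thesis by (simp add: mult.assoc)
      qed
      then show ?thesis using h2 by linarith
    qed
    then show ?thesis by blast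
  qed
  show ?thesis unfolding coneT_def rapidly_decreasing_def
    using nonneg sym rd by auto
qed


definition formOf :: "(int \<Rightarrow> real) \<Rightarrow> form" where
  "formOf a = (\<lambda>x y. if x \<in> Sdual \<and> y \<in> Sdual
      then infsum (\<lambda>p. complex_of_real (a p) * (cnj (x p) * y p)) UNIV else 0)"

lemma term_bound:
  assumes a: "a \<in> coneT" and x: "x \<in> Sdual" and y: "y \<in> Sdual"
  obtains M where "M \<ge> 0" "\<And>p. norm (complex_of_real (a p) * (cnj (x p) * y p)) \<le> M * (1 / (1 + \<bar>real_of_int p\<bar>)^2)"
proof -
  obtain kb Cb where Cb: "Cb \<ge> 0" "\<And>p. norm (x p) \<le> Cb * (1 + \<bar>real_of_int p\<bar>) ^ kb"
    using pg_nonneg[OF x] by blast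
  obtain kc Cc where Cc: "Cc \<ge> 0" "\<And>p. norm (y p) \<le> Cc * (1 + \<bar>real_of_int p\<bar>) ^ kc"
    using pg_nonneg[OF y] by blast
  obtain Ca where Ca: "\<And>p. (1 + \<bar>real_of_int p\<bar>) ^ (kb + kc + 2) * norm (a p) \<le> Ca"
    using a unfolding coneT_def rapidly_decreasing_def by blast
  have "norm (complex_of_real (a p) * (cnj (x p) * y p)) \<le> (Cb * Cc * Ca) * (1 / (1 + \<bar>real_of_int p\<bar>)^2)" for p
  proof -
    let ?w = "1 + \<bar>real_of_int p\<bar>"
    have wp: "?w > 0" by simp
    have e: "norm (complex_of_real (a p) * (cnj (x p) * y p)) = \<bar>a p\<bar> * (norm (x p) * norm (y p))"
      by (simp add: norm_mult)
    have bc: "norm (x p) * norm (y p) \<le> (Cb * ?w ^ kb) * (Cc * ?w ^ kc)"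
      by (rule mult_mono[OF Cb(2) Cc(2)]) (use Cb(1) in auto)
    have "\<bar>a p\<bar> * (norm (x p) * norm (y p)) \<le> \<bar>a p\<bar> * ((Cb * ?w ^ kb) * (Cc * ?w ^ kc))"
      by (rule mult_left_mono[OF bc]) simp
    also have "\<dots> = (Cb * Cc) * (\<bar>a p\<bar> * ?w ^ (kb + kc))"
      by (simp add: power_add ac_simps)
    also have "\<dots> \<le> (Cb * Cc) * (Ca / ?w^2)"
    proof (rule mult_left_mono)
      have "\<bar>a p\<bar> * ?w ^ (kb + kc) * ?w^2 = ?w ^ (kb + kc + 2) * norm (a p)"
        by (simp add: power_add power2_eq_square ac_simps)
      also have "\<dots> \<le> Ca" by (rule Ca)
      finally show "\<bar>a p\<bar> * ?w ^ (kb + kc) \<le> Ca / ?w^2" using wp by (simp add: pos_le_divide_eq)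
      show "0 \<le> Cb * Cc" using Cb(1) Cc(1) by simp
    qed
    also have "\<dots> = (Cb * Cc * Ca) * (1 / ?w^2)" by simp
    finally show ?thesis using e by simp
  qed
  moreover have "Cb * Cc * Ca \<ge> 0"
  proof -
    have "0 \<le> (1 + \<bar>real_of_int 0\<bar>) ^ (kb + kc + 2) * norm (a 0)" by simp
    then have "Ca \<ge> 0" using Ca[of 0] by linarith
    then show ?thesis using Cb(1) Cc(1) by simp
  qed
  ultimately show ?thesis using that by blast
qed

lemma term_summable:
  assumes "a \<in> coneT" "x \<in> Sdual" "y \<in> Sdual"
  shows "(\<lambda>p. complex_of_real (a p) * (cnj (x p) * y p)) summable_on UNIV"
proof -
  obtain M where "M \<ge> 0" "\<And>p. norm (complex_of_real (a p) * (cnj (x p) * y p)) \<le> M * (1 / (1 + \<bar>real_of_int p\<bar>)^2)"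
    using term_bound[OF assms] by blast
  then show ?thesis by (rule summable_bound(1))
qed

lemma formOf_sesq:
  assumes a: "a \<in> coneT"
  shows "sesquilinear_on_Sdual (formOf a)"
  unfolding sesquilinear_on_Sdual_def
proof (intro conjI allI impI ballI)
  fix x y assume "x \<notin> Sdual \<or> y \<notin> Sdual"
  then show "formOf a x y = 0" unfolding formOf_def by auto
next
  fix x y z :: "int \<Rightarrow> complex" and s t :: complex
  assume x: "x \<in> Sdual" and y: "y \<in> Sdual" and z: "z \<in> Sdual"
  have l: "(\<lambda>p. s * y p + t * z p) \<in> Sdual" by (rule Sdual_lin[OF y z])
  let ?T = "\<lambda>u v p. complex_of_real (a p) * (cnj (u p) * v p)"
  have sxy: "?T x y summable_on UNIV" and sxz: "?T x z summable_on UNIV"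
    and syx: "?T y x summable_on UNIV" and szx: "?T z x summable_on UNIV"
    using term_summable[OF a] x y z by auto
  have "formOf a x (\<lambda>p. s * y p + t * z p) = infsum (\<lambda>p. s * ?T x y p + t * ?T x z p) UNIV"
    unfolding formOf_def using x l by (simp add: algebra_simps)
  also have "\<dots> = infsum (\<lambda>p. s * ?T x y p) UNIV + infsum (\<lambda>p. t * ?T x z p) UNIV"
    by (rule infsum_add) (auto intro: summable_on_cmult_right sxy sxz)
  also have "\<dots> = s * formOf a x y + t * formOf a x z"
    unfolding formOf_def using x y z
    by (simp add: infsum_cmult_right[OF sxy] infsum_cmult_right[OF sxz])
  finally show "formOf a x (\<lambda>p. s * y p + t * z p) = s * formOf a x y + t * formOf a x z" .
  have "formOf a (\<lambda>p. s * y p + t * z p) x = infsum (\<lambda>p. cnj s * ?T y x p + cnj t * ?T z x p) UNIV"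
    unfolding formOf_def using x l by (simp add: algebra_simps)
  also have "\<dots> = infsum (\<lambda>p. cnj s * ?T y x p) UNIV + infsum (\<lambda>p. cnj t * ?T z x p) UNIV"
    by (rule infsum_add) (auto intro: summable_on_cmult_right syx szx)
  also have "\<dots> = cnj s * formOf a y x + cnj t * formOf a z x"
    unfolding formOf_def using x y z
    by (simp add: infsum_cmult_right[OF syx] infsum_cmult_right[OF szx])
  finally show "formOf a (\<lambda>p. s * y p + t * z p) x = cnj s * formOf a y x + cnj t * formOf a z x" .
qed


lemma dd_bound:
  assumes a: "a \<in> coneT"
  shows "\<exists>C. \<forall>p. (1 + \<bar>real_of_int p\<bar>) ^ k * (sqrt (a p) * (1 + \<bar>real_of_int p\<bar>)) \<le> C"
proof -
  obtain Ca where Ca: "\<And>p. (1 + \<bar>real_of_int p\<bar>) ^ (2 * k + 2) * norm (a p) \<le> Ca"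
    using a unfolding coneT_def rapidly_decreasing_def by blast
  have "(1 + \<bar>real_of_int p\<bar>) ^ k * (sqrt (a p) * (1 + \<bar>real_of_int p\<bar>)) \<le> sqrt Ca" for p
  proof -
    let ?w = "1 + \<bar>real_of_int p\<bar>"
    have ap: "a p \<ge> 0" using a unfolding coneT_def by auto
    have "?w ^ k * (sqrt (a p) * ?w) = sqrt ((?w ^ (k + 1))^2 * a p)"
      by (simp add: real_sqrt_mult ac_simps)
    also have "(?w ^ (k + 1))^2 * a p = ?w ^ (2 * k + 2) * norm (a p)"
    proof -
      have "(?w ^ (k + 1))^2 = ?w ^ ((k + 1) * 2)" by (rule power_mult[symmetric])
      also have "(k + 1) * 2 = 2 * k + 2" by simp
      finally show ?thesis using ap by simp
    qed
    also have "sqrt (?w ^ (2 * k + 2) * norm (a p)) \<le> sqrt Ca"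
      by (rule real_sqrt_le_mono[OF Ca])
    finally show ?thesis .
  qed
  then show ?thesis by blast
qed

lemma formOf_cont:
  assumes a: "a \<in> coneT"
  shows "continuous_form (formOf a)"
proof -
  define dd where "dd p = sqrt (a p) * (1 + \<bar>real_of_int p\<bar>)" for p
  have ap: "a p \<ge> 0" for p using a unfolding coneT_def by auto
  have dd0: "dd p \<ge> 0" for p unfolding dd_def using ap by simp
  define B where "B = range (\<lambda>p. (\<lambda>q. complex_of_real (dd p) * ebasis p q))"
  have elem: "\<exists>C. \<forall>c\<in>B. \<forall>q. (1 + \<bar>real_of_int q\<bar>) ^ k * norm (c q) \<le> C" for k
  proof -
    obtain C where C: "\<And>p. (1 + \<bar>real_of_int p\<bar>) ^ k * dd p \<le> C"
      using dd_bound[OF a, of k] unfolding dd_def by blast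
    have "(1 + \<bar>real_of_int q\<bar>) ^ k * norm (complex_of_real (dd p) * ebasis p q) \<le> max C 0" for p q
      using C[of p] dd0[of p] by (auto simp: ebasis_def norm_mult)
    then show ?thesis unfolding B_def by blast
  qed
  have SB: "S_bounded B"
    unfolding S_bounded_def
  proof (intro conjI allI subsetI)
    fix c assume "c \<in> B"
    then show "c \<in> Sspace" unfolding Sspace_def rapidly_decreasing_def
      using elem by blast
  next
    fix k show "\<exists>C. \<forall>c\<in>B. \<forall>p. (1 + \<bar>real_of_int p\<bar>) ^ k * norm (c p) \<le> C"
      by (rule elem)
  qed
  have "norm (formOf a u v) \<le> 1 * S2" if u: "u \<in> polar B" and v: "v \<in> polar B" for u v
  proof -
    have uS: "u \<in> Sdual" and vS: "v \<in> Sdual" using u v unfolding polar_def by auto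
    have pu: "norm (u p) * dd p \<le> 1" for p
    proof -
      have "(\<lambda>q. complex_of_real (dd p) * ebasis p q) \<in> B" unfolding B_def by blast
      then have "norm (pairing u (\<lambda>q. complex_of_real (dd p) * ebasis p q)) \<le> 1"
        using u unfolding polar_def by blast
      then show ?thesis unfolding pairing_ebasis_scaled2 using dd0[of p] by (simp add: norm_mult)
    qed
    have pv: "norm (v p) * dd p \<le> 1" for p
    proof -
      have "(\<lambda>q. complex_of_real (dd p) * ebasis p q) \<in> B" unfolding B_def by blast
      then have "norm (pairing v (\<lambda>q. complex_of_real (dd p) * ebasis p q)) \<le> 1"
        using v unfolding polar_def by blast
      then show ?thesis unfolding pairing_ebasis_scaled2 using dd0[of p] by (simp add: norm_mult)
    qed
    have tb: "norm (complex_of_real (a p) * (cnj (u p) * v p)) \<le> 1 * (1 / (1 + \<bar>real_of_int p\<bar>)^2)" for p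
    proof -
      let ?w = "1 + \<bar>real_of_int p\<bar>"
      have wp: "?w > 0" by simp
      have e: "norm (complex_of_real (a p) * (cnj (u p) * v p)) = a p * (norm (u p) * norm (v p))"
        using ap[of p] by (simp add: norm_mult)
      have "a p * (norm (u p) * norm (v p)) * ?w^2 = (norm (u p) * dd p) * (norm (v p) * dd p)"
        unfolding dd_def using ap[of p] by (simp add: power2_eq_square ac_simps)
      also have "\<dots> \<le> 1 * 1"
        by (rule mult_mono[OF pu pv]) (use dd0 in auto)
      finally have "a p * (norm (u p) * norm (v p)) \<le> 1 / ?w^2"
        using wp by (simp add: pos_le_divide_eq)
      then show ?thesis using e by simp
    qed
    have "norm (infsum (\<lambda>p. complex_of_real (a p) * (cnj (u p) * v p)) UNIV) \<le> 1 * S2"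
      by (rule summable_bound(2)[OF _ tb]) simp
    then show ?thesis unfolding formOf_def using uS vS by simp
  qed
  then show ?thesis unfolding continuous_form_def using SB by blast
qed

lemma cnj_mult_self: "cnj z * z = complex_of_real ((norm z)^2)"
  using complex_norm_square[of z] by (simp add: mult.commute)

lemma formOf_diag_term:
  "complex_of_real (a p) * (cnj (x p) * x p) = complex_of_real (a p * (norm (x p))^2)"
  by (simp add: cnj_mult_self)

lemma formOf_self:
  assumes a: "a \<in> coneT" and x: "x \<in> Sdual"
  shows "Im (formOf a x x) = 0" "Re (formOf a x x) = infsum (\<lambda>p. a p * (norm (x p))^2) UNIV"
    "(\<lambda>p. a p * (norm (x p))^2) summable_on UNIV"
proof -
  have s: "(\<lambda>p. complex_of_real (a p) * (cnj (x p) * x p)) summable_on UNIV"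
    by (rule term_summable[OF a x x])
  have "Im (formOf a x x) = infsum (\<lambda>p. Im (complex_of_real (a p) * (cnj (x p) * x p))) UNIV"
    unfolding formOf_def using x infsum_Im[OF s] by simp
  also have "\<dots> = 0" by (simp only: formOf_diag_term Im_complex_of_real infsum_0_simp)
  finally show "Im (formOf a x x) = 0" .
  have "Re (formOf a x x) = infsum (\<lambda>p. Re (complex_of_real (a p) * (cnj (x p) * x p))) UNIV"
    unfolding formOf_def using x infsum_Re[OF s] by simp
  also have "\<dots> = infsum (\<lambda>p. a p * (norm (x p))^2) UNIV"
    by (simp only: formOf_diag_term Re_complex_of_real)
  finally show "Re (formOf a x x) = infsum (\<lambda>p. a p * (norm (x p))^2) UNIV" .
  have "(\<lambda>p. Re (complex_of_real (a p) * (cnj (x p) * x p))) summable_on UNIV"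
    by (rule summable_on_Re[OF s])
  then show "(\<lambda>p. a p * (norm (x p))^2) summable_on UNIV"
    by (simp only: formOf_diag_term Re_complex_of_real)
qed

lemma formOf_psd:
  assumes a: "a \<in> coneT"
  shows "pos_semidef (formOf a)"
  unfolding pos_semidef_def
proof
  fix x assume x: "x \<in> Sdual"
  have ap: "a p \<ge> 0" for p using a unfolding coneT_def by auto
  show "Im (formOf a x x) = 0 \<and> 0 \<le> Re (formOf a x x)"
    using formOf_self[OF a x] ap by (auto intro!: infsum_nonneg)
qed

lemma formOf_pd:
  assumes a: "a \<in> coneT_plus"
  shows "pos_def (formOf a)"
  unfolding pos_def_def
proof (intro ballI impI)
  fix x assume x: "x \<in> Sdual" and nz: "x \<noteq> (\<lambda>_. 0)"
  have aT: "a \<in> coneT" and ap: "\<And>p. a p > 0" using a unfolding coneT_plus_def by auto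
  obtain p where p: "x p \<noteq> 0" using nz by auto
  have "0 < a p * (norm (x p))^2" using ap[of p] p by simp
  also have "\<dots> = sum (\<lambda>p. a p * (norm (x p))^2) {p}" by simp
  also have "\<dots> \<le> infsum (\<lambda>p. a p * (norm (x p))^2) UNIV"
    by (rule finite_sum_le_infsum[OF formOf_self(3)[OF aT x]]) (simp_all add: less_imp_le[OF ap])
  finally show "Im (formOf a x x) = 0 \<and> 0 < Re (formOf a x x)"
    using formOf_self[OF aT x] by simp
qed



lemma rot_Sdual:
  assumes "norm z = 1" "x \<in> Sdual"
  shows "rot z x \<in> Sdual"
  by (rule Sdual_dom[OF assms(2)]) (simp add: rot_def norm_mult norm_power_int assms(1))

lemma reversal_Sdual:
  assumes "x \<in> Sdual"
  shows "reversal x \<in> Sdual"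
proof -
  obtain k C where "\<And>p. norm (x p) \<le> C * (1 + \<bar>real_of_int p\<bar>) ^ k"
    using assms unfolding Sdual_def polynomial_growth_def by blast
  then have "norm (reversal x p) \<le> C * (1 + \<bar>real_of_int p\<bar>) ^ k" for p
    unfolding reversal_def by (metis abs_minus_cancel of_int_minus)
  then show ?thesis unfolding Sdual_def polynomial_growth_def by blast
qed

lemma formOf_inv:
  assumes a: "a \<in> coneT"
  shows "invariant_form (formOf a)"
  unfolding invariant_form_def
proof (intro conjI allI impI ballI)
  fix z :: complex and x y assume z: "norm z = 1" and x: "x \<in> Sdual" and y: "y \<in> Sdual"
  have e: "complex_of_real (a p) * (cnj (rot z x p) * rot z y p) = complex_of_real (a p) * (cnj (x p) * y p)" for p
  proof -
    have n: "cnj (z powi (- p)) * z powi (- p) = 1"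
      using cnj_mult_self[of "z powi (- p)"] z by (simp add: norm_power_int)
    have "cnj (rot z x p) * rot z y p = (cnj (z powi (- p)) * z powi (- p)) * (cnj (x p) * y p)"
      unfolding rot_def by (simp add: ac_simps)
    then show ?thesis using n by simp
  qed
  have ef: "(\<lambda>p. complex_of_real (a p) * (cnj (rot z x p) * rot z y p)) = (\<lambda>p. complex_of_real (a p) * (cnj (x p) * y p))"
    by (rule ext) (rule e)
  show "formOf a (rot z x) (rot z y) = formOf a x y"
    unfolding formOf_def using rot_Sdual[OF z x] rot_Sdual[OF z y] x y by (simp only: ef if_True simp_thms)
next
  fix x y assume x: "x \<in> Sdual" and y: "y \<in> Sdual"
  have sym: "a (- p) = a p" for p using a unfolding coneT_def by (metis (mono_tags, lifting) mem_Collect_eq minus_minus)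
  let ?g = "\<lambda>p. complex_of_real (a p) * (cnj (x p) * y p)"
  have "infsum (\<lambda>p. complex_of_real (a p) * (cnj (reversal x p) * reversal y p)) UNIV = infsum (?g \<circ> uminus) UNIV"
    unfolding reversal_def o_def using sym by simp
  also have "\<dots> = infsum ?g (uminus ` UNIV)"
    by (rule infsum_reindex[symmetric]) (simp add: inj_def)
  also have "uminus ` UNIV = (UNIV :: int set)" by (metis surj_def minus_minus)
  finally show "formOf a (reversal x) (reversal y) = formOf a x y"
    unfolding formOf_def using reversal_Sdual[OF x] reversal_Sdual[OF y] x y by simp
qed

lemma formOf_diag:
  assumes a: "a \<in> coneT"
  shows "diag_map (formOf a) = a"
proof
  fix p
  have "formOf a (ebasis p) (ebasis p) = infsum (\<lambda>q. complex_of_real (a q) * (cnj (ebasis p q) * ebasis p q)) UNIV"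
    unfolding formOf_def using ebasis_Sdual by simp
  also have "\<dots> = complex_of_real (a p)"
    by (subst infsum_single_pt[of p]) (auto simp: ebasis_def)
  finally show "diag_map (formOf a) p = a p" unfolding diag_map_def by simp
qed

lemma formOf_C: "a \<in> coneT \<Longrightarrow> formOf a \<in> coneC"
  unfolding coneC_def using formOf_sesq formOf_cont formOf_psd formOf_inv by blast

lemma formOf_Cplus: "a \<in> coneT_plus \<Longrightarrow> formOf a \<in> coneC_plus"
  unfolding coneC_plus_def using formOf_C formOf_pd unfolding coneT_plus_def by blast

lemma diag_in_Tplus:
  assumes f: "f \<in> coneC_plus"
  shows "diag_map f \<in> coneT_plus"
proof -
  have fC: "f \<in> coneC" and pd: "pos_def f" using f unfolding coneC_plus_def by auto
  have "ebasis p \<noteq> (\<lambda>_. 0)" for p by (metis ebasis_def one_neq_zero)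
  then have "diag_map f p > 0" for p
    using pd ebasis_Sdual unfolding pos_def_def diag_map_def by blast
  then show ?thesis unfolding coneT_plus_def using diag_in_T[OF fC] by blast
qed

theorem mainTheorem16:
  shows "bij_betw diag_map coneC coneT \<and> bij_betw diag_map coneC_plus coneT_plus \<and>
         (\<forall>f\<in>coneC. \<forall>g\<in>coneC. \<forall>t::real. t \<ge> 0 \<longrightarrow>
            diag_map (\<lambda>b c. f b c + complex_of_real t * g b c) = (\<lambda>p. diag_map f p + t * diag_map g p))"
proof (intro conjI ballI allI impI)
  show "bij_betw diag_map coneC coneT"
    unfolding bij_betw_def
  proof
    show "inj_on diag_map coneC" by (rule inj_diag)
    show "diag_map ` coneC = coneT"
    proof
      show "diag_map ` coneC \<subseteq> coneT" using diag_in_T by blast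
      show "coneT \<subseteq> diag_map ` coneC"
      proof
        fix a assume "a \<in> coneT"
        then show "a \<in> diag_map ` coneC" using formOf_C formOf_diag by (metis image_eqI)
      qed
    qed
  qed
  show "bij_betw diag_map coneC_plus coneT_plus"
    unfolding bij_betw_def
  proof
    show "inj_on diag_map coneC_plus"
      by (rule inj_on_subset[OF inj_diag]) (auto simp: coneC_plus_def)
    show "diag_map ` coneC_plus = coneT_plus"
    proof
      show "diag_map ` coneC_plus \<subseteq> coneT_plus" using diag_in_Tplus by blast
      show "coneT_plus \<subseteq> diag_map ` coneC_plus"
      proof
        fix a assume a: "a \<in> coneT_plus"
        then have "a \<in> coneT" unfolding coneT_plus_def by blast
        then show "a \<in> diag_map ` coneC_plus" using formOf_Cplus[OF a] formOf_diag by (metis image_eqI)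
      qed
    qed
  qed
  fix f g t
  show "diag_map (\<lambda>b c. f b c + complex_of_real t * g b c) = (\<lambda>p. diag_map f p + t * diag_map g p)"
    unfolding diag_map_def by simp
qed

end
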